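(* Let $\mathbf{G}$ be a labeled multilayer directed network (as defined in the context) on node set $\mathcal{V}=\{v_1,\dots,v_n\}$ with label set $\{C_1,\dots,C_h\}$ and attractiveness values $A_{i,l}$ such that, for each $l$, the values $A_{1,l},\dots,A_{n,l}$ are pairwise distinct. Suppose that $\mathbf{G}$ is extremal, i.e. $P(\mathbf{G})=\min_{\mathbf{H}\in\mathcal{R}(\mathbf{G})}P(\mathbf{H})$ or $P(\mathbf{G})=\max_{\mathbf{H}\in\mathcal{R}(\mathbf{G})}P(\mathbf{H})$. Let $E$ be a nonempty subset of the edge set $\mathcal{E}$ of $\mathbf{G}$ such that all edges of $E$ lie in the same layer $\mathbf{G}_l$ (i.e. $C_l\in\mathcal{C}(e)$ for every $e\in E$). Then there exists a node $v\in\lceil E\rceil_{tar}$ that has no $(2,\mathbf{G})$-follower in $\lceil E\rceil_{src}$.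
   Context: A labeled multilayer directed network $\mathbf{G}=(\mathcal{V},\mathcal{E})$ is a finite simple directed graph (no self-loops, no multiple edges) on nodes $\mathcal{V}=\{v_1,\dots,v_n\}$ in which each edge $v_i\to v_j\in\mathcal{E}$ carries a nonempty label set $\mathcal{C}(i,j)\subseteq\{C_1,\dots,C_h\}$; an ordered pair $(v_i,v_j)$ is an edge iff $\mathcal{C}(i,j)\neq\emptyset$. The $l$-th layer $\mathbf{G}_l=(\mathcal{V}_l,\mathcal{E}_l)$ consists of all edges with $C_l\in\mathcal{C}(i,j)$ and their endpoints. Each node $v_i$ has, for each $l$, an attractiveness $A_{i,l}\ge 0$; let $A_{\max,l}=\max_i A_{i,l}$. The potential energy of $v_i$ in layer $l$ is $P_l(i)=\sum_{j=1}^n (A_{\max,l}-A_{j,l})\,\chi(v_i\to v_j\in\mathcal{E}_l)$, and the total potential energy is $P(\mathbf{G})=\sum_{i=1}^n\sum_{l=1}^h P_l(i)$. A rewiring move replaces, for some layer $l$ and some edge $v_j\to v_k\in\mathcal{E}_l$, the layer-$l$ edge $v_j\to v_k$ by a layer-$l$ edge $v_j\to v_w$ with $w\neq j$ and $v_j\to v_w\notin\mathcal{E}_l$ (i.e. $C_l$ is removed from $\mathcal{C}(j,k)$ and added to $\mathcal{C}(j,w)$; the edge $v_j\to v_k$ disappears if its label set becomes empty, and $v_j\to v_w$ is created if it did not exist). $\mathcal{R}(\mathbf{G})$ denotes the set of all labeled multilayer networks (same nodes, same attractiveness values) obtainable from $\mathbf{G}$ by finite sequences of rewiring moves (including $\mathbf{G}$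 itself). For an edge set $E$, $\lceil E\rceil_{src}$ (resp. $\lceil E\rceil_{tar}$) is the set of source (resp. target) nodes of edges of $E$. A node $v_i$ is a $(2,\mathbf{G})$-follower of $v_j$ if the directed shortest-path distance from $v_i$ to $v_j$ in $\mathbf{G}$ (ignoring labels) equals exactly $2$. *)

theory Defs
  imports Complex_Main
begin

text \<open>Nodes are the elements of a finite type 'v, labels (layers) the elements of a
finite type 'l. A labeled multilayer network is given by its label-set function
C :: 'v => 'v => 'l set; (i,j) is an edge iff C i j is nonempty.\<close>

definition simple_net :: "('v \<Rightarrow> 'v \<Rightarrow> 'l set) \<Rightarrow> bool" where
  "simple_net C \<longleftrightarrow> (\<forall>i. C i i = {})"

definition edges :: "('v \<Rightarrow> 'v \<Rightarrow> 'l set) \<Rightarrow> ('v \<times> 'v) set" where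
  "edges C = {(i, j). C i j \<noteq> {}}"

definition Amax :: "('v::finite \<Rightarrow> 'l \<Rightarrow> real) \<Rightarrow> 'l \<Rightarrow> real" where
  "Amax A l = Max (range (\<lambda>i. A i l))"

definition pot_layer :: "('v::finite \<Rightarrow> 'l \<Rightarrow> real) \<Rightarrow> ('v \<Rightarrow> 'v \<Rightarrow> 'l set) \<Rightarrow> 'l \<Rightarrow> 'v \<Rightarrow> real" where
  "pot_layer A C l i = (\<Sum>j\<in>UNIV. (Amax A l - A j l) * (if l \<in> C i j then 1 else 0))"

definition total_pot :: "('v::finite \<Rightarrow> 'l::finite \<Rightarrow> real) \<Rightarrow> ('v \<Rightarrow> 'v \<Rightarrow> 'l set) \<Rightarrow> real" where
  "total_pot A C = (\<Sum>i\<in>UNIV. \<Sum>l\<in>UNIV. pot_layer A C l i)"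

definition rewire_step :: "('v \<Rightarrow> 'v \<Rightarrow> 'l set) \<Rightarrow> ('v \<Rightarrow> 'v \<Rightarrow> 'l set) \<Rightarrow> bool" where
  "rewire_step C C' \<longleftrightarrow> (\<exists>l j k w. l \<in> C j k \<and> w \<noteq> j \<and> l \<notin> C j w \<and>
      C' = (\<lambda>a b. if a = j \<and> b = k then C j k - {l}
                   else if a = j \<and> b = w then insert l (C j w)
                   else C a b))"

definition rewirings :: "('v \<Rightarrow> 'v \<Rightarrow> 'l set) \<Rightarrow> ('v \<Rightarrow> 'v \<Rightarrow> 'l set) set" where
  "rewirings C = {C'. rewire_step\<^sup>*\<^sup>* C C'}"

definition dist_eq :: "('v \<Rightarrow> 'v \<Rightarrow> 'l set) \<Rightarrow> 'v \<Rightarrow> 'v \<Rightarrow> nat \<Rightarrow> bool" where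
  "dist_eq C u v k \<longleftrightarrow> (u, v) \<in> edges C ^^ k \<and> (\<forall>m<k. (u, v) \<notin> edges C ^^ m)"

definition follower2 :: "('v \<Rightarrow> 'v \<Rightarrow> 'l set) \<Rightarrow> 'v \<Rightarrow> 'v \<Rightarrow> bool" where
  "follower2 C u v \<longleftrightarrow> dist_eq C u v 2"

end

theory Submission
  imports Defs
begin

lemma mdelta: "(g x::real) * (if x = t then 1 else 0) = (if x = t then g t else 0)"
  by simp

lemma delta:
  fixes g :: "'l::finite \<Rightarrow> 'v::finite \<Rightarrow> real"
  shows "(\<Sum>i\<in>(UNIV::'v set). \<Sum>l'\<in>UNIV. \<Sum>j\<in>UNIV. g l' j * (if i = u then if l' = l then if j = t then 1 else 0 else 0 else 0)) = g l t"
proof -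
  have inner: "(\<Sum>j\<in>UNIV. g l' j * (if i = u then if l' = l then if j = t then 1 else 0 else 0 else 0))
     = (if i = u then if l' = l then g l t else 0 else 0)" for i l' by (cases "i = u"; cases "l' = l") (simp_all add: mdelta)
  have inner2: "(\<Sum>l'\<in>UNIV. \<Sum>j\<in>UNIV. g l' j * (if i = u then if l' = l then if j = t then 1 else 0 else 0 else 0))
     = (if i = u then g l t else 0)" for i
    by (simp only: inner, cases "i = u") (simp_all only: sum.delta UNIV_I if_True if_False sum.neutral_const simp_thms finite_UNIV)
  show ?thesis by (simp only: inner2 sum.delta UNIV_I if_True finite_UNIV)
qed

lemma pot_change:
  fixes C :: "'v::finite \<Rightarrow> 'v \<Rightarrow> 'l::finite set"
  assumes lt: "l \<in> C u t" and lv: "l \<notin> C u v" and tv: "t \<noteq> v"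
    and H: "H = (\<lambda>a b. if a = u \<and> b = t then C u t - {l}
                   else if a = u \<and> b = v then insert l (C u v)
                   else C a b)"
  shows "total_pot A H = total_pot A C + A t l - A v l"
proof -
  define f where "f l' j = Amax A l' - A j l'" for l' j
  have ind: "(if l' \<in> H i j then 1 else 0::real) = (if l' \<in> C i j then 1 else 0)
      - (if i = u then if l' = l then if j = t then 1 else 0 else 0 else 0)
      + (if i = u then if l' = l then if j = v then 1 else 0 else 0 else 0)" for i j l'
    using lt lv tv by (auto simp: H)
  have "total_pot A H = (\<Sum>i\<in>UNIV. \<Sum>l'\<in>UNIV. \<Sum>j\<in>UNIV. f l' j * ((if l' \<in> C i j then 1 else 0)
      - (if i = u then if l' = l then if j = t then 1 else 0 else 0 else 0)
      + (if i = u then if l' = l then if j = v then 1 else 0 else 0 else 0)))"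
    unfolding total_pot_def pot_layer_def f_def ind by simp
  also have "\<dots> = (\<Sum>i\<in>UNIV. \<Sum>l'\<in>UNIV. \<Sum>j\<in>UNIV. f l' j * (if l' \<in> C i j then 1 else 0))
      - (\<Sum>i\<in>UNIV. \<Sum>l'\<in>UNIV. \<Sum>j\<in>UNIV. f l' j * (if i = u then if l' = l then if j = t then 1 else 0 else 0 else 0))
      + (\<Sum>i\<in>UNIV. \<Sum>l'\<in>UNIV. \<Sum>j\<in>UNIV. f l' j * (if i = u then if l' = l then if j = v then 1 else 0 else 0 else 0))"
    by (simp only: ring_distribs sum.distrib sum_subtractf)
  also have "\<dots> = total_pot A C - f l t + f l v"
    unfolding delta total_pot_def pot_layer_def f_def by simp
  finally show ?thesis by (simp add: f_def)
qed

theorem lemma1: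
  fixes C :: "'v::finite \<Rightarrow> 'v \<Rightarrow> 'l::finite set"
    and A :: "'v \<Rightarrow> 'l \<Rightarrow> real"
    and E :: "('v \<times> 'v) set"
    and l :: 'l
  assumes simple: "simple_net C"
    and A_nonneg: "\<And>i l. A i l \<ge> 0"
    and A_distinct: "\<And>l. inj (\<lambda>i. A i l)"
    and extremal: "(\<forall>H\<in>rewirings C. total_pot A C \<le> total_pot A H)
                 \<or> (\<forall>H\<in>rewirings C. total_pot A H \<le> total_pot A C)"
    and E_sub: "E \<subseteq> edges C"
    and E_ne: "E \<noteq> {}"
    and E_layer: "\<forall>(i, j)\<in>E. l \<in> C i j"
  shows "\<exists>v\<in>snd ` E. \<not> (\<exists>u\<in>fst ` E. follower2 C u v)"
proof (rule ccontr)
  assume "\<not> ?thesis"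
  hence all: "\<forall>v\<in>snd ` E. \<exists>u\<in>fst ` E. follower2 C u v" by blast
  have key: "\<exists>t\<in>snd ` E. t \<noteq> v \<and> total_pot A C + A t l - A v l \<in> total_pot A ` rewirings C"
    if vS: "v \<in> snd ` E" for v
  proof -
    obtain u where u: "u \<in> fst ` E" "follower2 C u v" using bspec[OF all vS] by (rule bexE)
    obtain p where p: "p \<in> E" "u = fst p" using u(1) by (rule imageE) simp
    obtain t where ut: "(u, t) \<in> E" using p by (cases p) simp
    have lt: "l \<in> C u t" using ut E_layer by blast
    have d: "\<forall>m<2. (u, v) \<notin> edges C ^^ m"
      using u(2) unfolding follower2_def dist_eq_def by (rule conjunct2)
    have "(u, v) \<notin> edges C ^^ 1" "(u, v) \<notin> edges C ^^ 0"
      using d[rule_format, of 1] d[rule_format, of 0] by simp_all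
    hence nuv: "(u, v) \<notin> edges C" "(u, v) \<notin> Id" by simp_all
    hence Cuv: "C u v = {}" "u \<noteq> v" by (auto simp: edges_def)
    have tv: "t \<noteq> v" using lt Cuv by auto
    define H where "H = (\<lambda>a b. if a = u \<and> b = t then C u t - {l}
                   else if a = u \<and> b = v then insert l (C u v)
                   else C a b)"
    have "rewire_step C H" unfolding rewire_step_def H_def
      apply (rule exI[of _ l], rule exI[of _ u], rule exI[of _ t], rule exI[of _ v])
      using lt Cuv by simp
    hence "H \<in> rewirings C" by (simp add: rewirings_def)
    moreover have "total_pot A H = total_pot A C + A t l - A v l"
      by (rule pot_change[OF lt _ tv H_def]) (use Cuv in auto)
    ultimately have "total_pot A C + A t l - A v l \<in> total_pot A ` rewirings C"
      by (metis image_eqI)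
    moreover have "t \<in> snd ` E" using ut by (metis image_eqI snd_conv)
    ultimately show ?thesis using tv by blast
  qed
  let ?S = "snd ` E"
  have fin: "finite ?S" by simp
  have ne: "?S \<noteq> {}" using E_ne by simp
  from extremal show False
  proof
    assume mn: "\<forall>H\<in>rewirings C. total_pot A C \<le> total_pot A H"
    define m where "m = Max ((\<lambda>x. A x l) ` ?S)"
    have "m \<in> (\<lambda>x. A x l) ` ?S" unfolding m_def using fin ne by (intro Max_in) auto
    then obtain v where v: "v \<in> ?S" "A v l = m" by blast
    obtain t where t: "t \<in> ?S" "t \<noteq> v" "total_pot A C + A t l - A v l \<in> total_pot A ` rewirings C"
      using key[OF v(1)] by blast
    have "A t l \<le> m" unfolding m_def using fin t(1) by (intro Max_ge) auto
    moreover have "A v l \<le> A t l"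
    proof -
      obtain H where "H \<in> rewirings C" "total_pot A C + A t l - A v l = total_pot A H" using t(3) by blast
      thus ?thesis using mn by fastforce
    qed
    ultimately have "A t l = A v l" using v by simp
    thus False using A_distinct[of l] t(2) by (meson injD)
  next
    assume mx: "\<forall>H\<in>rewirings C. total_pot A H \<le> total_pot A C"
    define m where "m = Min ((\<lambda>x. A x l) ` ?S)"
    have "m \<in> (\<lambda>x. A x l) ` ?S" unfolding m_def using fin ne by (intro Min_in) auto
    then obtain v where v: "v \<in> ?S" "A v l = m" by blast
    obtain t where t: "t \<in> ?S" "t \<noteq> v" "total_pot A C + A t l - A v l \<in> total_pot A ` rewirings C"
      using key[OF v(1)] by blast
    have "m \<le> A t l" unfolding m_def using fin t(1) by (intro Min_le) auto
    moreover have "A t l \<le> A v l"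
    proof -
      obtain H where "H \<in> rewirings C" "total_pot A C + A t l - A v l = total_pot A H" using t(3) by blast
      thus ?thesis using mx by fastforce
    qed
    ultimately have "A t l = A v l" using v by simp
    thus False using A_distinct[of l] t(2) by (meson injD)
  qed
qed

end
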